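(* Consider the following two-bidder sealed-bid first-price common-value auction with limit price $L\ge 0$. A single good has common value $v$, a random variable with CDF $F_v$, density $f_v$, support $\mathbb{R}_+$ and finite mean. Alice submits a (possibly randomized) bid $b_A\ge 0$ knowing only $F_v$. Then $v$ is realized; Bob observes $v$ (but not $b_A$) and submits a bid $\beta(v)\ge 0$. The highest bid wins and the winner pays their bid and receives payoff $v$ minus the bid (the loser gets $0$), except that if the highest bid is strictly below $L$ the good is unsold. Ties: if Alice's and Bob's bids are equal, Bob wins; if Bob's bid equals $L$ he can win; if the winning bid is Alice's and equals exactly $L$, the good is unsold. Assume $\mathbb{E}[v]>L$ and that there exists $\underline v$ in the support of $F_v$ with $$L=\mathbb{E}[\tilde v\mid \tilde v<\underline v],$$ where $\tilde v\sim F_v$. Define $$\beta_L(v)=\begin{cases}\mathbb{E}[\tilde v\mid \tilde v<v] & \text{if } v\ge \underline v,\\ L & \text{if } L<v<\underline v,\\ 0 & \text{if } v\le L.\end{cases}$$ Then the equilibrium (perfect Bayesian Nash equilibrium) bidding strategies are: Bob, upon observing $v$, bids $\beta_L(v)$; Alice uses the mixed strategy in which she draws a value $v'\sim F_v$ (independently of $v$) and bids $\beta_L(v')$.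
   Context: Bidders are risk neutral. $\tilde v$ denotes a generic random variable with CDF $F_v$; conditional expectations are with respect to $F_v$. *)

theory Defs
  imports "HOL-Probability.Probability"
begin

definition measure_support :: "real measure \<Rightarrow> real set" where
  "measure_support M = {x. \<forall>e>0. measure M (ball x e) > 0}"

text \<open>Conditional expectation E[v | v < u] under M (0/0 = 0 convention).\<close>
definition cond_exp_below :: "real measure \<Rightarrow> real \<Rightarrow> real" where
  "cond_exp_below M u = (LINT x:{..<u}|M. x) / measure M {..<u}"

definition beta_L :: "real measure \<Rightarrow> real \<Rightarrow> real \<Rightarrow> real \<Rightarrow> real" where
  "beta_L M L vl v =
     (if vl \<le> v then cond_exp_below M v else if L < v then L else 0)"

definition alice_payoff :: "real measure \<Rightarrow> real \<Rightarrow> (real \<Rightarrow> real) \<Rightarrow> real \<Rightarrow> real" where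
  "alice_payoff M L beta b =
     (\<integral>v. (if beta v < b \<and> L < b then v - b else 0) \<partial>M)"

definition bob_payoff :: "real \<Rightarrow> real measure \<Rightarrow> real \<Rightarrow> real \<Rightarrow> real" where
  "bob_payoff L G v c =
     (\<integral>b. (if b \<le> c \<and> L \<le> c then v - c else 0) \<partial>G)"

definition is_equilibrium ::
  "real measure \<Rightarrow> real \<Rightarrow> (real \<Rightarrow> real) \<Rightarrow> real measure \<Rightarrow> bool" where
  "is_equilibrium M L beta G \<longleftrightarrow>
     prob_space G \<and> sets G = sets borel \<and> (AE b in G. 0 \<le> b) \<and>
     beta \<in> borel_measurable borel \<and> (\<forall>v\<in>measure_support M. 0 \<le> beta v) \<and>
     (\<forall>b\<ge>0. alice_payoff M L beta b \<le> (\<integral>b'. alice_payoff M L beta b' \<partial>G)) \<and>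
     (\<forall>v\<in>measure_support M. \<forall>c\<ge>0. bob_payoff L G v c \<le> bob_payoff L G v (beta v))"

end

theory Submission
  imports Defs
begin

context
  fixes M :: "real measure"
  assumes P: "prob_space M" and SM: "sets M = sets borel"
    and atom: "\<And>x. measure M {x} = 0"
    and supp: "measure_support M = {0..}"
    and mean: "integrable M (\<lambda>x. x)"
begin

interpretation prob_space M by (rule P)

lemma sM[simp, measurable_cong]: "sets M = sets borel" by (rule SM)

lemma spM[simp]: "space M = UNIV"
  using sets_eq_imp_space_eq[OF SM] by simp

lemma fin[simp]: "emeasure M A \<noteq> \<infinity>"
  by (simp add: emeasure_finite)

lemma sint: "A \<in> sets borel \<Longrightarrow> set_integrable M A (\<lambda>x. a * x + c)"
proof -
  assume A: "A \<in> sets borel"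
  have "integrable M (\<lambda>x. a * x + c)"
    using mean by (intro Bochner_Integration.integrable_add integrable_mult_right) auto
  then show ?thesis unfolding set_integrable_def
    using A by (intro integrable_mult_indicator) auto
qed

lemma sint_x: "A \<in> sets borel \<Longrightarrow> set_integrable M A (\<lambda>x. x)"
  using sint[of A 1 0] by simp

lemma sint_c: "A \<in> sets borel \<Longrightarrow> set_integrable M A (\<lambda>x. c::real)"
  using sint[of A 0 c] by simp
lemma sint_const: "A \<in> sets borel \<Longrightarrow> (LINT x:A|M. (c::real)) = c * measure M A"
  by (subst set_integral_const) auto

lemma null_int: "A \<in> sets borel \<Longrightarrow> measure M A = 0 \<Longrightarrow> (LINT x:A|M. g x) = (0::real)"
proof -
  assume A: "A \<in> sets borel" "measure M A = 0"
  have "A \<in> null_sets M" using A by (simp add: null_sets_def emeasure_eq_measure)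
  then have "AE x in M. x \<notin> A" by (rule AE_not_in)
  then have "AE x in M. indicator A x *\<^sub>R g x = 0" by eventually_elim auto
  then show ?thesis unfolding set_lebesgue_integral_def by (simp add: integral_eq_zero_AE)
qed


abbreviation "FF t \<equiv> measure M {..<t}"
abbreviation "II t \<equiv> set_lebesgue_integral M {..<t} (\<lambda>x. x)"
abbreviation "mm t \<equiv> cond_exp_below M t"

lemma ident: "II u = mm u * FF u"
proof (cases "FF u = 0")
  case True then show ?thesis using null_int[of "{..<u}"] by simp
next
  case False then show ?thesis by (simp add: cond_exp_below_def)
qed

lemma atom_e: "emeasure M {x} = 0"
  using atom[of x] by (simp add: emeasure_eq_measure)

lemma le_lt_int: "(LINT x:{..u}|M. g x) = (LINT x:{..<u}|M. (g x::real))"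
  by (rule set_integral_discrete_difference[where X="{u}"]) (auto simp: atom_e)

lemma le_lt_meas: "measure M {..u} = FF u"
proof -
  have "{..u} = {..<u} \<union> {u}" by auto
  then have "measure M {..u} = FF u + measure M {u}"
    using finite_measure_Union[of "{..<u}" "{u}"] by simp
  then show ?thesis using atom by simp
qed

lemma split_F: "s \<le> t \<Longrightarrow> FF t = FF s + measure M {s..<t}"
proof -
  assume "s \<le> t"
  then have "{..<t} = {..<s} \<union> {s..<t}" by auto
  then show ?thesis using finite_measure_Union[of "{..<s}" "{s..<t}"] by (simp add: disjoint_iff)
qed

lemma split_I: "s \<le> t \<Longrightarrow> II t = II s + (LINT x:{s..<t}|M. x)"
proof -
  assume "s \<le> t"
  then have "{..<t} = {..<s} \<union> {s..<t}" by auto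
  then show ?thesis using set_integral_Un[of "{..<s}" "{s..<t}" M "\<lambda>x. x"] by (simp add: sint_x disjoint_iff)
qed

lemma int_lin1: "(LINT x:{..<w}|M. x - b) = II w - b * FF w"
  by (simp add: set_integral_diff sint_x sint_c sint_const)

lemma int_lin2: "(LINT x:{..<w}|M. v - x) = v * FF w - II w"
  by (simp add: set_integral_diff sint_x sint_c sint_const)

lemma int_lb: "A \<in> sets borel \<Longrightarrow> (\<And>x. x \<in> A \<Longrightarrow> s \<le> x) \<Longrightarrow> s * measure M A \<le> (LINT x:A|M. x)"
  using set_integral_mono[of M A "\<lambda>x. s" "\<lambda>x. x"] by (simp add: sint_x sint_c sint_const)

lemma int_ub: "A \<in> sets borel \<Longrightarrow> (\<And>x. x \<in> A \<Longrightarrow> x \<le> s) \<Longrightarrow> (LINT x:A|M. x) \<le> s * measure M A"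
  using set_integral_mono[of M A "\<lambda>x. x" "\<lambda>x. s"] by (simp add: sint_x sint_c sint_const)

lemma pos_int: "0 \<le> r \<Longrightarrow> r < t \<Longrightarrow> measure M {r..<t} > 0"
proof -
  assume a: "0 \<le> r" "r < t"
  have "(r+t)/2 \<in> measure_support M" using supp a by simp
  then have "measure M (ball ((r+t)/2) ((t-r)/2)) > 0" using a unfolding measure_support_def by auto
  moreover have "ball ((r+t)/2) ((t-r)/2) \<subseteq> {r..<t}" 
  proof
    fix x assume "x \<in> ball ((r+t)/2) ((t-r)/2)"
    then have "\<bar>(r+t)/2 - x\<bar> < (t-r)/2" by (simp only: mem_ball dist_real_def)
    then show "x \<in> {r..<t}" by (simp only: abs_less_iff atLeastLessThan_iff) (auto simp: field_simps)
  qed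
  ultimately show ?thesis using finite_measure_mono[of "ball ((r+t)/2) ((t-r)/2)" "{r..<t}"] by auto
qed


lemma FF_nonneg: "0 \<le> FF t" by simp

lemma strict_mono_m: "0 \<le> s \<Longrightarrow> s < t \<Longrightarrow> mm s < mm t"
proof -
  assume a: "0 \<le> s" "s < t"
  define r where "r = (s+t)/2"
  have r: "s < r" "r < t" "0 \<le> r" using a by (auto simp: r_def)
  define D where "D = measure M {s..<t}"
  define J where "J = (LINT x:{s..<t}|M. x)"
  have u: "{s..<t} = {s..<r} \<union> {r..<t}" using r by auto
  have dj: "{s..<r} \<inter> {r..<t} = {}" by auto
  have Dsplit: "D = measure M {s..<r} + measure M {r..<t}"
    unfolding D_def u using finite_measure_Union[of "{s..<r}" "{r..<t}"] dj by simp
  have Jsplit: "J = (LINT x:{s..<r}|M. x) + (LINT x:{r..<t}|M. x)"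
    unfolding J_def u using set_integral_Un[of "{s..<r}" "{r..<t}" M "\<lambda>x. x"] dj by (simp add: sint_x)
  have j1: "s * measure M {s..<r} \<le> (LINT x:{s..<r}|M. x)" by (rule int_lb) auto
  have j2: "r * measure M {r..<t} \<le> (LINT x:{r..<t}|M. x)" by (rule int_lb) auto
  have m2: "measure M {r..<t} > 0" using pos_int r by auto
  have m1: "measure M {s..<r} \<ge> 0" by simp
  have JD: "J > s * D"
  proof -
    have "(r - s) * measure M {r..<t} > 0" using m2 r by simp
    then show ?thesis using j1 j2 Jsplit Dsplit by (simp add: algebra_simps)
  qed
  have Dpos: "D > 0" using Dsplit m1 m2 by linarith
  have Is: "II s \<le> s * FF s" by (rule int_ub) auto
  have Ft: "FF t = FF s + D" unfolding D_def using split_F[of s t] a by simp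
  have It: "II t = II s + J" unfolding J_def using split_I[of s t] a by simp
  show ?thesis
  proof (cases "FF s = 0")
    case True
    then have "II s = 0" using null_int[of "{..<s}"] by simp
    then have "mm s = 0" using True by (simp add: cond_exp_below_def)
    moreover have "mm t = J / D" using True \<open>II s = 0\<close> Ft It by (simp add: cond_exp_below_def)
    moreover have "J > 0" using JD a Dpos by (smt (verit) mult_nonneg_nonneg)
    ultimately show ?thesis using Dpos by simp
  next
    case False
    then have Fs: "FF s > 0" using FF_nonneg[of s] by linarith
    have ms: "mm s = II s / FF s" by (simp add: cond_exp_below_def)
    have mt: "mm t = (II s + J) / (FF s + D)" using Ft It by (simp add: cond_exp_below_def)
    have "II s * D \<le> s * FF s * D" using Is Dpos by (simp add: mult_right_mono)
    also have "... < J * FF s" using JD Fs by (simp add: mult_strict_right_mono mult.commute mult.left_commute)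
    finally have key: "II s * D < J * FF s" .
    have "II s / FF s < (II s + J) / (FF s + D)"
      using key Fs Dpos by (simp add: divide_simps algebra_simps)
    then show ?thesis using ms mt by simp
  qed
qed

lemma mono_m: "0 \<le> s \<Longrightarrow> s \<le> t \<Longrightarrow> mm s \<le> mm t"
  using strict_mono_m[of s t] by (cases "s = t") auto


lemma lim_set_int:
  fixes g :: "real \<Rightarrow> real"
  assumes gi: "integrable M g" and conv: "\<And>x. (\<lambda>n. indicator (A n) x :: real) \<longlonglongrightarrow> indicator B x"
    and A: "\<And>n. A n \<in> sets borel" and B: "B \<in> sets borel"
  shows "(\<lambda>n. LINT x:A n|M. g x) \<longlonglongrightarrow> (LINT x:B|M. g x)"
  unfolding set_lebesgue_integral_def
proof (rule integral_dominated_convergence[where w="\<lambda>x. norm (g x)"])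
  have gm: "g \<in> borel_measurable M" using gi by auto
  show "(\<lambda>x. indicator B x *\<^sub>R g x) \<in> borel_measurable M"
    using gm B by (intro borel_measurable_scaleR) auto
  show "\<And>i. (\<lambda>x. indicator (A i) x *\<^sub>R g x) \<in> borel_measurable M"
    using gm A by (intro borel_measurable_scaleR) auto
  show "integrable M (\<lambda>x. norm (g x))" using gi by auto
  show "AE x in M. (\<lambda>i. indicator (A i) x *\<^sub>R g x) \<longlonglongrightarrow> indicator B x *\<^sub>R g x"
    by (intro AE_I2 tendsto_scaleR conv tendsto_const)
  show "\<And>i. AE x in M. norm (indicator (A i) x *\<^sub>R g x) \<le> norm (g x)"
    by (intro AE_I2) (auto simp: indicator_def)
qed

lemma DS:
  fixes g :: "real \<Rightarrow> real"
  assumes gi: "integrable M g"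
    and down: "\<And>x y. y \<in> T \<Longrightarrow> x \<le> y \<Longrightarrow> x \<in> T"
    and aT: "a \<in> T"
    and bnd: "\<And>w. w \<in> T \<Longrightarrow> a \<le> w \<Longrightarrow> (LINT x:{..<w}|M. g x) \<le> K"
  shows "(LINT x:T|M. g x) \<le> K"
proof (cases "bdd_above T")
  case True
  define u where "u = Sup T"
  have Tne: "T \<noteq> {}" using aT by auto
  have ub: "\<And>y. y \<in> T \<Longrightarrow> y \<le> u" using True unfolding u_def by (simp add: cSup_upper)
  have lt: "\<And>x. x < u \<Longrightarrow> x \<in> T"
  proof -
    fix x assume "x < u"
    then obtain y where "y \<in> T" "x < y" using less_cSup_iff[OF Tne True] u_def by auto
    then show "x \<in> T" using down by auto
  qed
  have au: "a \<le> u" using ub aT .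
  show ?thesis
  proof (cases "u \<in> T")
    case True
    then have "T = {..u}" using ub down by auto
    then have "(LINT x:T|M. g x) = (LINT x:{..<u}|M. g x)" using le_lt_int by simp
    then show ?thesis using bnd[OF True au] by simp
  next
    case False
    then have T: "T = {..<u}" using ub lt by (metis lessThan_iff order_le_less subsetI subset_antisym)
    have au': "a < u" using au aT False by (cases "a = u") auto
    define w where "w n = u - inverse (real (Suc n))" for n
    have wu: "w n < u" for n by (simp add: w_def)
    have ev: "\<exists>N. \<forall>n\<ge>N. z \<le> w n" if zu: "z < u" for z
    proof -
      obtain N where N: "N > 0" "inverse (real N) < u - z" using ex_inverse_of_nat_less[of "u - z"] zu by auto
      have "z \<le> w n" if "n \<ge> N" for n
      proof -
        have "inverse (real (Suc n)) \<le> inverse (real N)"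
          using that N by (intro le_imp_inverse_le) auto
        then show ?thesis using N unfolding w_def by linarith
      qed
      then show ?thesis by blast
    qed
    have conv: "(\<lambda>n. indicator {..<w n} x :: real) \<longlonglongrightarrow> indicator {..<u} x" for x
    proof (cases "x < u")
      case True
      obtain N where N: "\<forall>n\<ge>N. (x+u)/2 \<le> w n" using ev[of "(x+u)/2"] True by auto
      have "eventually (\<lambda>n. indicator {..<w n} x = (indicator {..<u} x :: real)) sequentially"
        unfolding eventually_sequentially
        using N True by (intro exI[of _ N]) (auto simp: indicator_def)
      then show ?thesis by (rule tendsto_eventually)
    next
      case False
      then have "\<And>n. indicator {..<w n} x = (indicator {..<u} x :: real)"
        using wu by (auto simp: indicator_def less_le_not_le intro: order.trans)
      then show ?thesis by simp
    qed
    have lim: "(\<lambda>n. LINT x:{..<w n}|M. g x) \<longlonglongrightarrow> (LINT x:{..<u}|M. g x)"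
      by (rule lim_set_int[OF gi conv]) auto
    obtain N where N: "\<forall>n\<ge>N. a \<le> w n" using ev[OF au'] by auto
    have "\<forall>n\<ge>N. (LINT x:{..<w n}|M. g x) \<le> K"
      using N bnd wu T by auto
    then have "(LINT x:{..<u}|M. g x) \<le> K" using LIMSEQ_le_const2[OF lim] by blast
    then show ?thesis using T by simp
  qed
next
  case False
  have T: "T = UNIV"
  proof -
    have "x \<in> T" for x
    proof -
      from False obtain y where "y \<in> T" "x < y" unfolding bdd_above_def by (meson not_le)
      then show ?thesis using down by auto
    qed
    then show ?thesis by auto
  qed
  define w where "w n = a + real n" for n
  have conv: "(\<lambda>n. indicator {..<w n} x :: real) \<longlonglongrightarrow> indicator UNIV x" for x
  proof -
    obtain N where N: "x - a < real N" using reals_Archimedean2 by auto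
    have "eventually (\<lambda>n. indicator {..<w n} x = (indicator UNIV x :: real)) sequentially"
      unfolding eventually_sequentially
      using N by (intro exI[of _ N]) (auto simp: indicator_def w_def)
    then show ?thesis by (rule tendsto_eventually)
  qed
  have lim: "(\<lambda>n. LINT x:{..<w n}|M. g x) \<longlonglongrightarrow> (LINT x:UNIV|M. g x)"
    by (rule lim_set_int[OF gi conv]) auto
  have "\<forall>n\<ge>0. (LINT x:{..<w n}|M. g x) \<le> K"
    using bnd T by (auto simp: w_def)
  then show ?thesis using LIMSEQ_le_const2[OF lim] T by blast
qed


lemma gen_bound: "v * FF w - II w \<le> v * FF v - II v"
proof (cases "w \<le> v")
  case True
  have "(LINT x:{w..<v}|M. x) \<le> v * measure M {w..<v}" by (rule int_ub) auto
  then show ?thesis using split_F[OF True] split_I[OF True] by (simp add: algebra_simps)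
next
  case False
  then have F: "v \<le> w" by simp
  have "v * measure M {v..<w} \<le> (LINT x:{v..<w}|M. x)" by (rule int_lb) auto
  then show ?thesis using split_F[OF F] split_I[OF F] by (simp add: algebra_simps)
qed

lemma gen_bound2: "v \<le> a \<Longrightarrow> a \<le> w \<Longrightarrow> v * FF w - II w \<le> v * FF a - II a"
proof -
  assume a: "v \<le> a" "a \<le> w"
  have "a * measure M {a..<w} \<le> (LINT x:{a..<w}|M. x)" by (rule int_lb) auto
  moreover have "v * measure M {a..<w} \<le> a * measure M {a..<w}" using a by (simp add: mult_right_mono)
  ultimately show ?thesis using split_F[OF a(2)] split_I[OF a(2)] by (simp add: algebra_simps)
qed

context
  fixes L vl :: real
  assumes L0: "0 \<le> L" and vl0: "0 \<le> vl" and Lvl: "L = mm vl"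
begin

abbreviation "bb \<equiv> beta_L M L vl"

lemma bb_ge: "vl \<le> v \<Longrightarrow> bb v = mm v" by (simp add: beta_L_def)
lemma bb_lt: "v < vl \<Longrightarrow> bb v \<le> L" using L0 by (simp add: beta_L_def)

lemma mm_ge_L: "vl \<le> v \<Longrightarrow> L \<le> mm v" using mono_m[of vl v] vl0 Lvl by simp

lemma bb_nonneg: "0 \<le> bb v"
  using mm_ge_L[of v] L0 by (auto simp: beta_L_def)

lemma bb_mono: "mono bb"
proof (rule monoI)
  fix x y :: real assume xy: "x \<le> y"
  show "bb x \<le> bb y"
  proof (cases "vl \<le> x")
    case True
    then show ?thesis using xy mono_m[of x y] vl0 by (simp add: beta_L_def)
  next
    case False
    then show ?thesis using xy mm_ge_L[of y] L0 by (auto simp: beta_L_def)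
  qed
qed

lemma bb_meas: "bb \<in> borel_measurable borel"
  by (rule borel_measurable_mono[OF bb_mono])


lemma alice_le0: "alice_payoff M L bb b \<le> 0"
proof (cases "L < b")
  case False
  then show ?thesis by (simp add: alice_payoff_def)
next
  case True
  define T where "T = {v. bb v < b}"
  have eq: "alice_payoff M L bb b = (LINT x:T|M. x - b)"
    unfolding alice_payoff_def set_lebesgue_integral_def T_def using True
    by (intro Bochner_Integration.integral_cong) (auto simp: indicator_def)
  have "(LINT x:T|M. x - b) \<le> 0"
  proof (rule DS[where a=vl])
    show "integrable M (\<lambda>x. x - b)" using mean by auto
    show "\<And>x y. y \<in> T \<Longrightarrow> x \<le> y \<Longrightarrow> x \<in> T"
    proof -
      fix x y assume a: "y \<in> T" "x \<le> y"
      then have "bb x \<le> bb y" using bb_mono by (simp add: monoD)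
      then show "x \<in> T" using a(1) by (simp add: T_def)
    qed
    show "vl \<in> T" unfolding T_def using bb_ge[of vl] Lvl True by simp
    fix w assume w: "w \<in> T" "vl \<le> w"
    then have "mm w < b" unfolding T_def using bb_ge by simp
    then have "(mm w - b) * FF w \<le> 0" by (simp add: mult_nonpos_nonneg)
    then show "(LINT x:{..<w}|M. x - b) \<le> 0" using int_lin1[of w b] ident[of w] by (simp add: algebra_simps)
  qed
  then show ?thesis using eq by simp
qed

lemma alice_bb0: "alice_payoff M L bb (bb v) = 0"
proof (cases "L < bb v")
  case False
  then show ?thesis by (simp add: alice_payoff_def)
next
  case True
  then have v: "vl \<le> v" using bb_lt[of v] by (meson not_le not_less)
  then have bv: "bb v = mm v" by (rule bb_ge)
  have T: "{w. bb w < bb v} = {..<v}"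
  proof (intro set_eqI iffI)
    fix w assume a: "w \<in> {w. bb w < bb v}"
    show "w \<in> {..<v}"
    proof (rule ccontr)
      assume "w \<notin> {..<v}"
      then have "v \<le> w" by simp
      then have "bb v \<le> bb w" using bb_mono by (simp add: monoD)
      then show False using a by simp
    qed
  next
    fix w assume w: "w \<in> {..<v}"
    show "w \<in> {w. bb w < bb v}"
    proof (cases "vl \<le> w")
      case True
      then show ?thesis using strict_mono_m[of w v] w vl0 bv bb_ge[of w] by simp
    next
      case False
      then show ?thesis using bb_lt[of w] True by simp
    qed
  qed
  have eq: "alice_payoff M L bb (bb v) = (LINT x:{..<v}|M. x - mm v)"
    unfolding alice_payoff_def set_lebesgue_integral_def T[symmetric] using True bv
    by (intro Bochner_Integration.integral_cong) (auto simp: indicator_def)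
  then show ?thesis using int_lin1[of v "mm v"] ident[of v] by simp
qed


lemma bb_measM: "bb \<in> measurable M borel"
  using bb_meas measurable_cong_sets[OF sM refl, of borel] by simp

lemma bob_formula: "bob_payoff L (distr M borel bb) v c = (if L \<le> c then (LINT x:{w. bb w \<le> c}|M. v - c) else 0)"
proof -
  have fm: "(\<lambda>b::real. if b \<le> c \<and> L \<le> c then v - c else 0) \<in> borel_measurable borel" by measurable
  have "bob_payoff L (distr M borel bb) v c = (\<integral>x. (if bb x \<le> c \<and> L \<le> c then v - c else 0) \<partial>M)"
    unfolding bob_payoff_def using integral_distr[OF bb_measM fm] by simp
  also have "... = (if L \<le> c then (LINT x:{w. bb w \<le> c}|M. v - c) else 0)"
  proof (cases "L \<le> c")
    case True
    have "(\<lambda>x. if bb x \<le> c \<and> L \<le> c then v - c else 0) = (\<lambda>x. indicator {w. bb w \<le> c} x *\<^sub>R (v - c))"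
      using True by (auto simp: indicator_def)
    then show ?thesis using True unfolding set_lebesgue_integral_def by simp
  next
    case False
    then show ?thesis by simp
  qed
  finally show ?thesis .
qed

lemma bob_K:
  assumes Lc: "L \<le> c"
  shows "(LINT x:{w. bb w \<le> c}|M. v - c) \<le> (if vl \<le> v then v * FF v - II v else v * FF vl - II vl)"
proof (rule DS[where a=vl])
  show "integrable M (\<lambda>x. v - c)" by simp
  show "\<And>x y. y \<in> {w. bb w \<le> c} \<Longrightarrow> x \<le> y \<Longrightarrow> x \<in> {w. bb w \<le> c}"
  proof -
    fix x y assume a: "y \<in> {w. bb w \<le> c}" "x \<le> y"
    then have "bb x \<le> bb y" using bb_mono by (simp add: monoD)
    then show "x \<in> {w. bb w \<le> c}" using a(1) by simp
  qed
  show "vl \<in> {w. bb w \<le> c}" using bb_ge[of vl] Lvl Lc by simp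
  fix w assume w: "w \<in> {w. bb w \<le> c}" "vl \<le> w"
  then have mw: "mm w \<le> c" using bb_ge by simp
  have "(LINT x:{..<w}|M. v - c) = (v - c) * FF w" by (simp add: sint_const)
  also have "... \<le> (v - mm w) * FF w" using mw by (simp add: mult_right_mono)
  also have "... = v * FF w - II w" using ident[of w] by (simp add: algebra_simps)
  also have "... \<le> (if vl \<le> v then v * FF v - II v else v * FF vl - II vl)"
    using gen_bound[of v w] gen_bound2[of v vl w] w(2) by auto
  finally show "(LINT x:{..<w}|M. v - c) \<le> (if vl \<le> v then v * FF v - II v else v * FF vl - II vl)" .
qed

lemma bob_star:
  assumes v0: "0 \<le> v"
  shows "(if vl \<le> v then v * FF v - II v else v * FF vl - II vl) \<le> bob_payoff L (distr M borel bb) v (bb v)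
       \<and> 0 \<le> bob_payoff L (distr M borel bb) v (bb v)"
proof (cases "vl \<le> v")
  case True
  have bv: "bb v = mm v" using bb_ge[OF True] .
  have T: "{w. bb w \<le> bb v} = {..v}"
  proof (intro set_eqI iffI)
    fix w assume a: "w \<in> {w. bb w \<le> bb v}"
    show "w \<in> {..v}"
    proof (rule ccontr)
      assume "w \<notin> {..v}"
      then have "v < w" by simp
      then have "mm v < mm w" using strict_mono_m[of v w] v0 by simp
      moreover have "bb w = mm w" using bb_ge[of w] True \<open>v < w\<close> by simp
      ultimately show False using a bv by simp
    qed
  next
    fix w assume "w \<in> {..v}"
    then show "w \<in> {w. bb w \<le> bb v}" using bb_mono by (simp add: monoD)
  qed
  have "bob_payoff L (distr M borel bb) v (bb v) = (v - mm v) * FF v"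
    using bob_formula[of v "bb v"] T bv mm_ge_L[OF True] by (simp add: sint_const le_lt_meas)
  also have "... = v * FF v - II v" using ident[of v] by (simp add: algebra_simps)
  finally have eq: "bob_payoff L (distr M borel bb) v (bb v) = v * FF v - II v" .
  have "II v \<le> v * FF v" by (rule int_ub) auto
  then show ?thesis using eq True by simp
next
  case False
  then have vlv: "v < vl" by simp
  show ?thesis
  proof (cases "L < v")
    case True
    have bv: "bb v = L" using True vlv by (simp add: beta_L_def)
    have T: "{w. bb w \<le> L} = {..vl}"
    proof (intro set_eqI iffI)
      fix w assume a: "w \<in> {w. bb w \<le> L}"
      show "w \<in> {..vl}"
      proof (rule ccontr)
        assume "w \<notin> {..vl}"
        then have "vl < w" by simp
        then have "mm vl < mm w" using strict_mono_m[of vl w] vl0 by simp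
        moreover have "bb w = mm w" using bb_ge[of w] \<open>vl < w\<close> by simp
        ultimately show False using a Lvl by simp
      qed
    next
      fix w assume "w \<in> {..vl}"
      then have "bb w \<le> bb vl" using bb_mono by (simp add: monoD)
      then show "w \<in> {w. bb w \<le> L}" using bb_ge[of vl] Lvl by simp
    qed
    have "bob_payoff L (distr M borel bb) v (bb v) = (v - L) * FF vl"
      using bob_formula[of v "bb v"] T bv by (simp add: sint_const le_lt_meas)
    also have "... = v * FF vl - II vl" using ident[of vl] Lvl by (simp add: algebra_simps)
    finally have eq: "bob_payoff L (distr M borel bb) v (bb v) = v * FF vl - II vl" .
    have "0 \<le> (v - L) * FF vl" using True by simp
    then show ?thesis using eq False ident[of vl] Lvl by (simp add: algebra_simps)
  next
    case nLv: False
    have bv: "bb v = 0" using nLv vlv by (simp add: beta_L_def)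
    have z: "bob_payoff L (distr M borel bb) v (bb v) = 0"
    proof (cases "L = 0")
      case True
      then have "v = 0" using nLv v0 by simp
      have "(\<lambda>b. if b \<le> bb v \<and> L \<le> bb v then v - bb v else (0::real)) = (\<lambda>b. 0)"
        using bv \<open>v = 0\<close> by auto
      then show ?thesis unfolding bob_payoff_def by (simp only:) simp
    next
      case False
      then show ?thesis using bv L0 by (simp add: bob_payoff_def)
    qed
    have "v * FF vl - II vl = (v - L) * FF vl" using ident[of vl] Lvl by (simp add: algebra_simps)
    also have "... \<le> 0" using nLv by (simp add: mult_nonpos_nonneg)
    finally show ?thesis using z False by simp
  qed
qed

lemma bob_opt:
  assumes v0: "0 \<le> v"
  shows "bob_payoff L (distr M borel bb) v c \<le> bob_payoff L (distr M borel bb) v (bb v)"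
proof (cases "L \<le> c")
  case True
  then show ?thesis using bob_formula[of v c] bob_K[OF True, of v] bob_star[OF v0] by simp
next
  case False
  then show ?thesis using bob_formula[of v c] bob_star[OF v0] by simp
qed


lemma alice_G: "(\<integral>b'. alice_payoff M L bb b' \<partial>(distr M borel bb)) = 0"
proof (cases "integrable (distr M borel bb) (alice_payoff M L bb)")
  case True
  then have "alice_payoff M L bb \<in> borel_measurable (distr M borel bb)" by auto
  then have m: "alice_payoff M L bb \<in> borel_measurable borel"
    using measurable_cong_sets[OF sets_distr[of M borel bb] refl, of borel] by simp
  show ?thesis using integral_distr[OF bb_measM m] alice_bb0 by simp
next
  case False
  then show ?thesis by (rule not_integrable_integral_eq)
qed

end

end

theorem theorem1:
  fixes M :: "real measure" and f :: "real \<Rightarrow> ennreal" and L vl :: real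
  assumes f_meas: "f \<in> borel_measurable borel"
    and M_dens: "M = density lborel f"
    and prob: "prob_space M"
    and supp: "measure_support M = {0..}"
    and mean: "integrable M (\<lambda>x. x)"
    and L_nonneg: "0 \<le> L"
    and mean_gt: "(\<integral>x. x \<partial>M) > L"
    and vl_supp: "vl \<in> measure_support M"
    and vl_def: "L = cond_exp_below M vl"
  shows "is_equilibrium M L (beta_L M L vl) (distr M borel (beta_L M L vl))"
proof -
  have SM: "sets M = sets borel" using M_dens by simp
  have atom: "measure M {x} = 0" for x
  proof -
    have "emeasure M {x} = (\<integral>\<^sup>+ y. f y * indicator {x} y \<partial>lborel)"
      using M_dens f_meas by (simp add: emeasure_density)
    also have "... = 0" by simp
    finally show ?thesis by (simp add: measure_def)
  qed
  have vl0: "0 \<le> vl" using vl_supp supp by simp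
  note ctx = prob SM atom supp mean L_nonneg vl0 vl_def
  show ?thesis
    unfolding is_equilibrium_def
  proof (intro conjI ballI allI impI)
    show "prob_space (distr M borel (beta_L M L vl))"
      by (rule prob_space.prob_space_distr[OF prob bb_measM[OF ctx]])
    show "sets (distr M borel (beta_L M L vl)) = sets borel" by simp
    show "AE b in distr M borel (beta_L M L vl). 0 \<le> b"
    proof -
      have ms: "{x \<in> space borel. 0 \<le> (x::real)} \<in> sets borel" by measurable
      show ?thesis by (subst AE_distr_iff[OF bb_measM[OF ctx] ms]) (simp add: bb_nonneg[OF ctx])
    qed
    show "beta_L M L vl \<in> borel_measurable borel" by (rule bb_meas[OF ctx])
    show "\<And>v. 0 \<le> beta_L M L vl v" by (rule bb_nonneg[OF ctx])
    fix b :: real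
    show "alice_payoff M L (beta_L M L vl) b
         \<le> (\<integral>b'. alice_payoff M L (beta_L M L vl) b' \<partial>distr M borel (beta_L M L vl))"
      using alice_le0[OF ctx, of b] alice_G[OF ctx] by simp
  next
    fix v c :: real
    assume "v \<in> measure_support M" "0 \<le> c"
    then have "0 \<le> v" using supp by simp
    then show "bob_payoff L (distr M borel (beta_L M L vl)) v c
        \<le> bob_payoff L (distr M borel (beta_L M L vl)) v (beta_L M L vl v)"
      by (rule bob_opt[OF ctx])
  qed
qed

end
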